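(* Let $\mathcal{D}$ be an $S(2,k,v)$ and $G_0=0$-$\mathrm{BIG}(\mathcal{D})$. If $v>k^3-2k^2+2k$, then every maximum independent set of $G_0$ is of the form $T(x)$ for some element $x$, and consequently $\alpha(G_0)=\frac{v-1}{k-1}$.
   Context: A Steiner $2$-design $S(2,k,v)$ ($2<k<v$) is a pair $(V,\mathcal{B})$ with $|V|=v$ and $\mathcal{B}$ a collection of $k$-subsets of $V$ (blocks) such that every $2$-subset of $V$ lies in exactly one block. The $0$-block intersection graph $0$-$\mathrm{BIG}(\mathcal{D})$ has the blocks as vertices, two blocks adjacent iff they are disjoint. For an element $x\in V$, $T(x)$ denotes the set of the $\frac{v-1}{k-1}$ blocks containing $x$. $\alpha(G)$ is the independence number. *)

theory Defs
  imports Main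
begin

definition steiner_2_design :: "nat \<Rightarrow> 'a set \<Rightarrow> 'a set set \<Rightarrow> bool" where
  "steiner_2_design k V \<B> \<longleftrightarrow>
     finite V \<and> 2 < k \<and> k < card V \<and>
     (\<forall>B\<in>\<B>. B \<subseteq> V \<and> card B = k) \<and>
     (\<forall>P. P \<subseteq> V \<and> card P = 2 \<longrightarrow> (\<exists>!B. B \<in> \<B> \<and> P \<subseteq> B))"

definition big0_adj :: "'a set set \<Rightarrow> 'a set \<Rightarrow> 'a set \<Rightarrow> bool" where
  "big0_adj \<B> B C \<longleftrightarrow> B \<in> \<B> \<and> C \<in> \<B> \<and> B \<noteq> C \<and> B \<inter> C = {}"

definition big0_indep :: "'a set set \<Rightarrow> 'a set set \<Rightarrow> bool" where
  "big0_indep \<B> S \<longleftrightarrow> S \<subseteq> \<B> \<and> (\<forall>B\<in>S. \<forall>C\<in>S. \<not> big0_adj \<B> B C)"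

definition big0_max_indep :: "'a set set \<Rightarrow> 'a set set \<Rightarrow> bool" where
  "big0_max_indep \<B> S \<longleftrightarrow> big0_indep \<B> S \<and>
     (\<forall>S'. big0_indep \<B> S' \<longrightarrow> card S' \<le> card S)"

definition big0_alpha :: "'a set set \<Rightarrow> nat" where
  "big0_alpha \<B> = Max (card ` {S. big0_indep \<B> S})"

definition T_blocks :: "'a set set \<Rightarrow> 'a \<Rightarrow> 'a set set" where
  "T_blocks \<B> x = {B \<in> \<B>. x \<in> B}"

end

theory Submission
  imports Defs
begin

lemma inter_le1:
  assumes "steiner_2_design k V \<B>" "B \<in> \<B>" "C \<in> \<B>" "p \<in> B" "p \<in> C" "q \<in> B" "q \<in> C" "p \<noteq> q"
  shows "B = C"
proof -
  have u: "\<forall>P. P \<subseteq> V \<and> card P = 2 \<longrightarrow> (\<exists>!B. B \<in> \<B> \<and> P \<subseteq> B)"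
    using assms(1) unfolding steiner_2_design_def by (elim conjE) assumption
  have bl: "\<forall>B\<in>\<B>. B \<subseteq> V \<and> card B = k"
    using assms(1) unfolding steiner_2_design_def by (elim conjE) assumption
  have "B \<subseteq> V" using bl assms(2) by simp
  then have "{p,q} \<subseteq> V" using assms(4,6) by blast
  moreover have "card {p,q} = 2" using assms(8) by simp
  ultimately have "\<exists>!B. B \<in> \<B> \<and> {p,q} \<subseteq> B" by (intro u[rule_format] conjI)
  then obtain B0 where B0: "\<And>y. y \<in> \<B> \<and> {p,q} \<subseteq> y \<Longrightarrow> y = B0" by (elim ex1E) auto
  have "B = B0" using assms(2,4,6) by (intro B0) simp
  moreover have "C = B0" using assms(3,5,7) by (intro B0) simp
  ultimately show ?thesis by simp
qed

lemma sd_facts: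
  assumes "steiner_2_design k V \<B>"
  shows "finite V" "2 < k" "k < card V" "\<And>B. B \<in> \<B> \<Longrightarrow> B \<subseteq> V" "\<And>B. B \<in> \<B> \<Longrightarrow> card B = k"
    "\<And>x y. x \<in> V \<Longrightarrow> y \<in> V \<Longrightarrow> x \<noteq> y \<Longrightarrow> \<exists>B. B \<in> \<B> \<and> x \<in> B \<and> y \<in> B"
proof -
  have u: "\<forall>P. P \<subseteq> V \<and> card P = 2 \<longrightarrow> (\<exists>!B. B \<in> \<B> \<and> P \<subseteq> B)"
    using assms(1) unfolding steiner_2_design_def by (elim conjE) assumption
  have bl: "\<forall>B\<in>\<B>. B \<subseteq> V \<and> card B = k"
    using assms(1) unfolding steiner_2_design_def by (elim conjE) assumption
  show "finite V" using assms(1) unfolding steiner_2_design_def by (elim conjE) assumption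
  show "2 < k" using assms(1) unfolding steiner_2_design_def by (elim conjE) assumption
  show "k < card V" using assms(1) unfolding steiner_2_design_def by (elim conjE) assumption
  show "\<And>B. B \<in> \<B> \<Longrightarrow> B \<subseteq> V" "\<And>B. B \<in> \<B> \<Longrightarrow> card B = k" using bl by simp_all
  fix x y assume "x \<in> V" "y \<in> V" "x \<noteq> y"
  then have "{x,y} \<subseteq> V" "card {x,y} = 2" by simp_all
  then have "\<exists>!B. B \<in> \<B> \<and> {x,y} \<subseteq> B" by (intro u[rule_format] conjI)
  then obtain B where "B \<in> \<B> \<and> {x,y} \<subseteq> B" by (elim ex1E) auto
  then show "\<exists>B. B \<in> \<B> \<and> x \<in> B \<and> y \<in> B" by blast
qed

lemma fin_B: assumes "steiner_2_design k V \<B>" shows "finite \<B>"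
proof -
  have "\<B> \<subseteq> Pow V" using sd_facts(4)[OF assms] by auto
  moreover have "finite V" using sd_facts(1)[OF assms] by auto
  ultimately show ?thesis by (meson finite_Pow_iff finite_subset)
qed

lemma T_card:
  assumes D: "steiner_2_design k V \<B>" and x: "x \<in> V"
  shows "card (T_blocks \<B> x) * (k - 1) = card V - 1"
proof -
  let ?T = "T_blocks \<B> x"
  have finV: "finite V" using sd_facts(1)[OF D] by auto
  have finT: "finite ?T" using fin_B[OF D] unfolding T_blocks_def by auto
  have cov: "V - {x} = (\<Union>B\<in>?T. B - {x})"
  proof
    show "V - {x} \<subseteq> (\<Union>B\<in>?T. B - {x})"
    proof
      fix y assume y: "y \<in> V - {x}"
      obtain B where "B \<in> \<B>" "{x,y} \<subseteq> B" using sd_facts(6)[OF D, of x y] x y by auto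
      then show "y \<in> (\<Union>B\<in>?T. B - {x})" using y unfolding T_blocks_def by auto
    qed
    show "(\<Union>B\<in>?T. B - {x}) \<subseteq> V - {x}" using sd_facts(4)[OF D] unfolding T_blocks_def by auto
  qed
  have "card (\<Union>B\<in>?T. B - {x}) = (\<Sum>B\<in>?T. card (B - {x}))"
  proof (rule card_UN_disjoint[OF finT])
    show "\<forall>i\<in>?T. finite (i - {x})" using sd_facts(4)[OF D] finV unfolding T_blocks_def
      by (auto intro: finite_subset)
    show "\<forall>i\<in>?T. \<forall>j\<in>?T. i \<noteq> j \<longrightarrow> (i - {x}) \<inter> (j - {x}) = {}"
    proof (intro ballI impI)
      fix i j assume i: "i \<in> ?T" and j: "j \<in> ?T" and ij: "i \<noteq> j"
      show "(i - {x}) \<inter> (j - {x}) = {}"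
      proof (rule ccontr)
        assume "(i - {x}) \<inter> (j - {x}) \<noteq> {}"
        then obtain z where z: "z \<in> i" "z \<in> j" "z \<noteq> x" by blast
        have "i \<in> \<B>" "x \<in> i" "j \<in> \<B>" "x \<in> j" using i j unfolding T_blocks_def by simp_all
        then have "i = j" using inter_le1[OF D, of i j x z] z by simp
        then show False using ij by simp
      qed
    qed
  qed
  also have "\<dots> = (\<Sum>B\<in>?T. k - 1)"
  proof (rule sum.cong)
    fix B assume "B \<in> ?T"
    then show "card (B - {x}) = k - 1" using sd_facts(4,5)[OF D] finV unfolding T_blocks_def by (auto intro: finite_subset)
  qed simp
  finally have f: "card (\<Union>B\<in>?T. B - {x}) = card ?T * (k - 1)" by simp
  have c1: "card (V - {x}) = card V - 1" using finV x by simp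
  show ?thesis using f c1 by (simp only: cov[symmetric])
qed

lemma bound:
  assumes D: "steiner_2_design k V \<B>" and SB: "S \<subseteq> \<B>"
    and inter: "\<forall>B\<in>S. \<forall>C\<in>S. B \<inter> C \<noteq> {}"
    and B: "B \<in> S" and ns: "\<forall>x\<in>B. \<exists>D\<in>S. x \<notin> D"
  shows "card S \<le> k * (k - 1) + 1"
proof -
  define Sx where "Sx x = {C \<in> S. x \<in> C} - {B}" for x
  have finS: "finite S" using fin_B[OF D] SB finite_subset by blast
  have kB: "card B = k" "finite B" using sd_facts(1,4,5)[OF D] B SB
    by (auto intro: finite_subset)
  have sub: "S \<subseteq> insert B (\<Union>x\<in>B. Sx x)"
  proof
    fix C assume C: "C \<in> S"
    show "C \<in> insert B (\<Union>x\<in>B. Sx x)"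
    proof (cases "C = B")
      case False
      then obtain x where "x \<in> B" "x \<in> C" using inter B C by blast
      then show ?thesis using C False unfolding Sx_def by auto
    qed simp
  qed
  have cx: "card (Sx x) \<le> k - 1" if xB: "x \<in> B" for x
  proof -
    obtain Dd where Dd: "Dd \<in> S" "x \<notin> Dd" using ns xB by blast
    obtain y where y: "y \<in> B" "y \<in> Dd" using inter B Dd by blast
    define f where "f C = (SOME z. z \<in> C \<inter> Dd)" for C
    have fC: "f C \<in> C \<inter> Dd" if "C \<in> S" for C
      unfolding f_def using inter that Dd(1) by (metis some_in_eq)
    have kD: "card Dd = k" "finite Dd" using sd_facts(1,4,5)[OF D] Dd SB
      by (auto intro: finite_subset)
    have inj: "inj_on f (Sx x)"
    proof (rule inj_onI)
      fix C C' assume C: "C \<in> Sx x" and C': "C' \<in> Sx x" and eq: "f C = f C'"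
      have "f C \<in> C \<inter> Dd" "f C' \<in> C' \<inter> Dd" using fC C C' unfolding Sx_def by auto
      moreover have "f C \<noteq> x" using \<open>f C \<in> C \<inter> Dd\<close> Dd by auto
      ultimately show "C = C'" using inter_le1[OF D, of C C' x "f C"] C C' SB eq unfolding Sx_def by auto
    qed
    have img: "f ` (Sx x) \<subseteq> Dd - B"
    proof
      fix z assume "z \<in> f ` Sx x"
      then obtain C where C: "C \<in> Sx x" "z = f C" by blast
      have zC: "z \<in> C \<inter> Dd" using fC C unfolding Sx_def by auto
      have "z \<noteq> x" using zC Dd by auto
      moreover have "C \<noteq> B" "x \<in> C" using C unfolding Sx_def by auto
      ultimately have "z \<notin> B" using inter_le1[OF D, of C B x z] C SB B xB zC unfolding Sx_def by auto
      then show "z \<in> Dd - B" using zC by auto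
    qed
    have "card (Sx x) \<le> card (Dd - B)" using card_inj_on_le[OF inj img] kD by simp
    also have "card (Dd - B) \<le> k - 1"
    proof -
      have "Dd - B \<subseteq> Dd - {y}" using y by auto
      then have "card (Dd - B) \<le> card (Dd - {y})" using kD by (simp add: card_mono)
      then show ?thesis using kD y by simp
    qed
    finally show ?thesis .
  qed
  have "card S \<le> card (insert B (\<Union>x\<in>B. Sx x))"
    using sub finS kB Sx_def by (intro card_mono) (auto simp: Sx_def)
  also have "\<dots> \<le> Suc (card (\<Union>x\<in>B. Sx x))" by (simp add: card_insert_le_m1 card_insert_if)
  also have "card (\<Union>x\<in>B. Sx x) \<le> (\<Sum>x\<in>B. card (Sx x))" by (rule card_UN_le[OF kB(2)])
  also have "\<dots> \<le> (\<Sum>x\<in>B. k - 1)" using cx by (intro sum_mono) auto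
  also have "\<dots> = k * (k - 1)" using kB by simp
  finally show ?thesis by simp
qed

theorem lemma6:
  fixes V :: "'a set" and \<B> :: "'a set set" and k :: nat
  assumes "steiner_2_design k V \<B>"
    and "int (card V) > int k ^ 3 - 2 * int k ^ 2 + 2 * int k"
  shows "(\<forall>S. big0_max_indep \<B> S \<longrightarrow> (\<exists>x\<in>V. S = T_blocks \<B> x))
         \<and> big0_alpha \<B> = (card V - 1) div (k - 1)"
proof -
  note D = assms(1)
  have finV: "finite V" and k2: "2 < k" and kV: "k < card V"
    using sd_facts[OF D] by auto
  have finB: "finite \<B>" by (rule fin_B[OF D])
  define r where "r = (card V - 1) div (k - 1)"
  have big: "k * (k - 1) + 1 < card (T_blocks \<B> x)" and rT: "card (T_blocks \<B> x) = r"
    if x: "x \<in> V" for x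
  proof -
    have e: "card (T_blocks \<B> x) * (k - 1) = card V - 1" by (rule T_card[OF D x])
    have k1: "k - 1 > 0" using k2 by simp
    show "card (T_blocks \<B> x) = r" unfolding r_def using e k1 by (metis nonzero_mult_div_cancel_right neq0_conv)
    have ei: "int (card (T_blocks \<B> x)) * (int k - 1) = int (card V) - 1"
    proof -
      have a: "int (k - 1) = int k - 1" using k2 by simp
      have b: "int (card V - 1) = int (card V) - 1" using kV by simp
      have "int (card (T_blocks \<B> x) * (k - 1)) = int (card V - 1)" using e by (simp only:)
      then show ?thesis using a b by (simp only: of_nat_mult)
    qed
    have "(int k - 1) * (int k * (int k - 1) + 1) = int k ^ 3 - 2 * int k ^ 2 + 2 * int k - 1"
      by (simp add: algebra_simps power2_eq_square power3_eq_cube)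
    then have "(int k - 1) * (int k * (int k - 1) + 1) < (int k - 1) * int (card (T_blocks \<B> x))"
      using ei assms(2) by (simp add: mult.commute)
    then have "int k * (int k - 1) + 1 < int (card (T_blocks \<B> x))"
      using k2 by (simp add: mult_less_cancel_left)
    moreover have h: "int (k * (k - 1) + 1) = int k * (int k - 1) + 1" using k2 by (simp add: of_nat_diff)
    ultimately have "int (k * (k - 1) + 1) < int (card (T_blocks \<B> x))" by (simp only:)
    then show "k * (k - 1) + 1 < card (T_blocks \<B> x)" by (simp only: of_nat_less_iff)
  qed
  have indT: "big0_indep \<B> (T_blocks \<B> x)" for x
    unfolding big0_indep_def big0_adj_def T_blocks_def by auto
  have finT: "finite (T_blocks \<B> x)" for x using finB unfolding T_blocks_def by auto
  obtain x0 where x0: "x0 \<in> V" using kV by (metis card.empty ex_in_conv not_less0)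
  have P1: "\<exists>x\<in>V. S = T_blocks \<B> x" if S: "big0_max_indep \<B> S" for S
  proof -
    have SB: "S \<subseteq> \<B>" and ind: "\<forall>B\<in>S. \<forall>C\<in>S. \<not> big0_adj \<B> B C"
      and mx: "\<And>S'. big0_indep \<B> S' \<Longrightarrow> card S' \<le> card S"
      using S unfolding big0_max_indep_def big0_indep_def by auto
    have finS: "finite S" using finB SB finite_subset by blast
    have inter: "\<forall>B\<in>S. \<forall>C\<in>S. B \<inter> C \<noteq> {}"
    proof (intro ballI)
      fix B C assume B: "B \<in> S" and C: "C \<in> S"
      show "B \<inter> C \<noteq> {}"
      proof (cases "B = C")
        case True
        have "card B = k" using sd_facts(5)[OF D] B SB by auto
        then show ?thesis using True k2 by auto
      qed (use ind B C SB in \<open>auto simp: big0_adj_def\<close>)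
    qed
    have c0: "card (T_blocks \<B> x0) \<le> card S" using mx indT by blast
    then have "k * (k - 1) + 1 < card S" using big[OF x0] by linarith
    then obtain B where B: "B \<in> S" by (metis card.empty ex_in_conv not_less0)
    show ?thesis
    proof (cases "\<exists>x\<in>B. \<forall>D\<in>S. x \<in> D")
      case True
      then obtain x where xB: "x \<in> B" and xS: "\<forall>D\<in>S. x \<in> D" by blast
      have xV: "x \<in> V" using sd_facts(4)[OF D] B SB xB by auto
      have sub: "S \<subseteq> T_blocks \<B> x" using SB xS unfolding T_blocks_def by auto
      have "card (T_blocks \<B> x) \<le> card S" using mx indT by blast
      then have "S = T_blocks \<B> x" using card_seteq[OF finT sub] by simp
      then show ?thesis using xV by blast
    next
      case False
      then have "card S \<le> k * (k - 1) + 1" using bound[OF D SB inter B] by blast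
      then show ?thesis using \<open>k * (k - 1) + 1 < card S\<close> by simp
    qed
  qed
  have P2: "big0_alpha \<B> = r"
  proof -
    let ?I = "{S. big0_indep \<B> S}"
    have finI: "finite ?I" using finB unfolding big0_indep_def by (simp add: finite_subset[of _ "Pow \<B>"] subset_eq)
    have ne: "card ` ?I \<noteq> {}" using indT by blast
    have "Max (card ` ?I) \<in> card ` ?I" using Max_in finI ne by blast
    then obtain S where S: "big0_indep \<B> S" "card S = Max (card ` ?I)" by auto
    have "big0_max_indep \<B> S" unfolding big0_max_indep_def using S finI by auto
    then obtain x where "x \<in> V" "S = T_blocks \<B> x" using P1 by blast
    then show ?thesis unfolding big0_alpha_def using S rT by simp
  qed
  show ?thesis using P1 P2 r_def by blast
qed

end
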